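(* Assume $k = 1$ and values are i.i.d. (all $F_i = F$ on $[0,\bar v]$). Fix $r \ge 0$ and let $A$ be the allocation rule that gives the item to a highest-value bidder if that value is at least $r$, and to no one otherwise. Then among all (non-negative) payment rules $P$ implementing $A$, the winner-pays-bid rule (with $b^{\mathrm{WPB}}(v_i) = 0$ for $v_i < r$) minimizes $\mathbb E[g(\sum_i P_i(\bm v))]$ for every convex $g : \mathbb R \to \mathbb R$ (for which the expectations exist).
   Context: Setting: $n$ risk-neutral unit-demand bidders and $k$ identical items, $1 \le k < n$. Bidder $i$ has private value $v_i \in \mathcal V_i = [0,\bar v_i]$, drawn independently across bidders from a distribution $F_i$ with density $f_i > 0$ on $\mathcal V_i$; $\bm v = (v_1,\dots,v_n)$, $\mathcal V = \prod_i \mathcal V_i$. An allocation rule is a measurable map $A : \mathcal V \to \{0,1\}^n$ with $\sum_i A_i(\bm v) \le k$. Its interim allocation is $x_i(v_i) = \mathbb E[A_i(\bm v) \mid v_i]$; its interim payment function is $z_i(v_i) = v_i x_i(v_i) - \int_0^{v_i} x_i(u)\,du$. A payment rule is a measurable map $P : \mathcal V \to [0,\infty)^n$ (payments are non-negative). $P$ implements $A$ if $(A,P)$ is Bayesian incentive compatible, i.e. $\mathbb E[v_i A_i(\bm v) - P_i(\bm v) \mid v_i] \ge \mathbb E[v_i A_i(v_i',\bm v_{-i}) - P_i(v_i',\bm v_{-i}) \mid v_i]$ for all $i, v_i, v_i'$, and satisfies revenue equivalence $\mathbb E[P_i(\bm v) \mid v_i] = z_i(v_i)$ for all $i, v_i$.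 The winner-pays-bid (WPB) payment rule is $P_i^{\mathrm{WPB}}(\bm v) = b^{\mathrm{WPB}}(v_i) A_i(\bm v)$ with $b^{\mathrm{WPB}}(v_i) = z_i(v_i)/x_i(v_i)$ when $x_i(v_i) > 0$ and $b^{\mathrm{WPB}}(v_i) = 0$ otherwise. *)

theory Defs
  imports "HOL-Probability.Probability"
begin

definition val_space :: "nat \<Rightarrow> real measure \<Rightarrow> (nat \<Rightarrow> real) measure" where
  "val_space n M = PiM {..<n} (\<lambda>_. M)"

text \<open>Interim expectation E[h(v) | v_i = t] under independent values:
  integrate over the other coordinates with coordinate i fixed to t.\<close>
definition interim ::
  "nat \<Rightarrow> real measure \<Rightarrow> ((nat \<Rightarrow> real) \<Rightarrow> real) \<Rightarrow> nat \<Rightarrow> real \<Rightarrow> real" where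
  "interim n M h i t = (\<integral>w. h (w(i := t)) \<partial>(val_space n M))"

definition interim_alloc ::
  "nat \<Rightarrow> real measure \<Rightarrow> ((nat \<Rightarrow> real) \<Rightarrow> nat \<Rightarrow> real) \<Rightarrow> nat \<Rightarrow> real \<Rightarrow> real" where
  "interim_alloc n M A i t = interim n M (\<lambda>v. A v i) i t"

definition interim_pay ::
  "nat \<Rightarrow> real measure \<Rightarrow> ((nat \<Rightarrow> real) \<Rightarrow> nat \<Rightarrow> real) \<Rightarrow> nat \<Rightarrow> real \<Rightarrow> real" where
  "interim_pay n M A i t =
     t * interim_alloc n M A i t - (\<integral>u\<in>{0..t}. interim_alloc n M A i u \<partial>lborel)"

text \<open>P implements A: P is a measurable non-negative payment rule, (A,P) is
  Bayesian incentive compatible, and revenue equivalence holds (the interim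
  expectations involved are required to exist).\<close>
definition implements ::
  "nat \<Rightarrow> real measure \<Rightarrow> real \<Rightarrow> ((nat \<Rightarrow> real) \<Rightarrow> nat \<Rightarrow> real)
    \<Rightarrow> ((nat \<Rightarrow> real) \<Rightarrow> nat \<Rightarrow> real) \<Rightarrow> bool" where
  "implements n M vbar A P \<longleftrightarrow>
     (\<forall>i<n. (\<lambda>v. P v i) \<in> borel_measurable (val_space n M)) \<and>
     (\<forall>v\<in>space (val_space n M). \<forall>i<n. 0 \<le> P v i) \<and>
     (\<forall>i<n. \<forall>t\<in>{0..vbar}. integrable (val_space n M) (\<lambda>w. P (w(i := t)) i)) \<and>
     (\<forall>i<n. \<forall>t\<in>{0..vbar}. \<forall>t'\<in>{0..vbar}.
        interim n M (\<lambda>v. v i * A v i - P v i) i t \<ge>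
        interim n M (\<lambda>v. v i * A (v(i := t')) i - P (v(i := t')) i) i t) \<and>
     (\<forall>i<n. \<forall>t\<in>{0..vbar}. interim n M (\<lambda>v. P v i) i t = interim_pay n M A i t)"

definition bid_wpb ::
  "nat \<Rightarrow> real measure \<Rightarrow> ((nat \<Rightarrow> real) \<Rightarrow> nat \<Rightarrow> real) \<Rightarrow> nat \<Rightarrow> real \<Rightarrow> real" where
  "bid_wpb n M A i t =
     (if interim_alloc n M A i t > 0
      then interim_pay n M A i t / interim_alloc n M A i t else 0)"

definition pay_wpb ::
  "nat \<Rightarrow> real measure \<Rightarrow> ((nat \<Rightarrow> real) \<Rightarrow> nat \<Rightarrow> real) \<Rightarrow> (nat \<Rightarrow> real) \<Rightarrow> nat \<Rightarrow> real" where
  "pay_wpb n M A v i = bid_wpb n M A i (v i) * A v i"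

end

theory Submission
  imports Defs
begin



lemma upd_PiE_iff:
  assumes "i \<in> I"
  shows "(w(i:=t) \<in> PiE I B \<and> w \<in> PiE I (\<lambda>_. UNIV)) \<longleftrightarrow> (t \<in> B i \<and> w \<in> PiE I (B(i:=UNIV)))"
proof
  assume h: "w(i:=t) \<in> PiE I B \<and> w \<in> PiE I (\<lambda>_. UNIV)"
  have "t \<in> B i" using h assms by (metis PiE_mem fun_upd_same)
  moreover have "w \<in> PiE I (B(i:=UNIV))"
  proof (rule PiE_I)
    fix j assume "j \<in> I" then show "w j \<in> (B(i:=UNIV)) j"
      using h by (cases "j = i") (auto dest: PiE_mem[where x=j])
  next
    fix j assume "j \<notin> I" then show "w j = undefined" using h by (auto simp: PiE_def extensional_def)
  qed
  ultimately show "t \<in> B i \<and> w \<in> PiE I (B(i:=UNIV))" ..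
next
  assume h: "t \<in> B i \<and> w \<in> PiE I (B(i:=UNIV))"
  have "w(i:=t) \<in> PiE I B"
  proof (rule PiE_I)
    fix j assume "j \<in> I" then show "(w(i:=t)) j \<in> B j"
      using h by (cases "j = i") (auto dest: PiE_mem[where x=j])
  next
    fix j assume "j \<notin> I" then show "(w(i:=t)) j = undefined" using h assms by (auto simp: PiE_def extensional_def)
  qed
  moreover have "w \<in> PiE I (\<lambda>_. UNIV)" using h by (auto simp: PiE_def extensional_def)
  ultimately show "w(i:=t) \<in> PiE I B \<and> w \<in> PiE I (\<lambda>_. UNIV)" ..
qed

lemma chord3:
  fixes g :: "real \<Rightarrow> real"
  assumes g: "convex_on UNIV g" and abc: "a < b" "b < c"
  shows "(g b - g a) / (b - a) \<le> (g c - g b) / (c - b)"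
proof -
  have "(g a - g b) / (a - b) \<le> (g b - g c) / (b - c)"
    using convex_on_slope_le[OF g _ _ abc] order_trans by blast
  moreover have "(g a - g b) / (a - b) = (g b - g a) / (b - a)"
    by (metis minus_diff_eq minus_divide_divide)
  moreover have "(g b - g c) / (b - c) = (g c - g b) / (c - b)"
    by (metis minus_diff_eq minus_divide_divide)
  ultimately show ?thesis by simp
qed

lemma convex_subgrad:
  fixes g :: "real \<Rightarrow> real"
  assumes g: "convex_on UNIV g"
  obtains D where "mono D" "\<And>x y. g y + D y * (x - y) \<le> g x"
proof -
  define D where "D y = Inf ((\<lambda>h. (g (y + h) - g y) / h) ` {0<..})" for y
  have bdd: "bdd_below ((\<lambda>h. (g (y + h) - g y) / h) ` {0<..})" for y
  proof (rule bdd_belowI2)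
    fix h :: real assume "h \<in> {0<..}"
    then have "(g y - g (y - 1)) / (y - (y - 1)) \<le> (g (y + h) - g y) / (y + h - y)"
      by (intro chord3[OF g]) auto
    then show "g y - g (y - 1) \<le> (g (y + h) - g y) / h" by simp
  qed
  have Dr: "D y \<le> (g (y + h) - g y) / h" if "0 < h" for y h
    unfolding D_def by (rule cInf_lower) (use that bdd in auto)
  have Dl: "(g y - g a) / (y - a) \<le> D y" if "a < y" for y a
    unfolding D_def
  proof (rule cInf_greatest)
    show "(\<lambda>h. (g (y + h) - g y) / h) ` {0<..} \<noteq> {}" by auto
  next
    fix z assume "z \<in> (\<lambda>h. (g (y + h) - g y) / h) ` {0<..}"
    then obtain h where h: "0 < h" "z = (g (y + h) - g y) / h" by auto
    have "(g y - g a) / (y - a) \<le> (g (y + h) - g y) / (y + h - y)"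
      by (intro chord3[OF g]) (use that h in auto)
    then show "(g y - g a) / (y - a) \<le> z" using h by simp
  qed
  have "mono D"
  proof (rule monoI)
    fix y y' :: real assume "y \<le> y'"
    show "D y \<le> D y'"
    proof (cases "y = y'")
      case False
      then have lt: "y < y'" using \<open>y \<le> y'\<close> by simp
      have "D y \<le> (g (y + (y' - y)) - g y) / (y' - y)" by (rule Dr) (use lt in simp)
      also have "\<dots> = (g y' - g y) / (y' - y)" by simp
      also have "\<dots> \<le> D y'" by (rule Dl[OF lt])
      finally show ?thesis .
    qed simp
  qed
  moreover have "g y + D y * (x - y) \<le> g x" for x y
  proof (cases x y rule: linorder_cases)
    case less
    have "(g y - g x) / (y - x) \<le> D y" by (rule Dl[OF less])
    then have "g y - g x \<le> D y * (y - x)" using less by (simp add: divide_le_eq)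
    then show ?thesis by (simp add: algebra_simps)
  next
    case greater
    have "D y \<le> (g (y + (x - y)) - g y) / (x - y)" by (rule Dr) (use greater in simp)
    then have "D y * (x - y) \<le> g x - g y" using greater by (simp add: le_divide_eq)
    then show ?thesis by simp
  qed simp
  ultimately show ?thesis using that by blast
qed

locale auc =
  fixes n :: nat and f :: "real \<Rightarrow> real" and vbar r :: real
    and A :: "(nat \<Rightarrow> real) \<Rightarrow> nat \<Rightarrow> real"
    and M :: "real measure"
  assumes n: "1 < n"
    and vbar: "0 < vbar"
    and r: "0 \<le> r"
    and f_meas: "f \<in> borel_measurable lborel"
    and f_pos: "\<forall>x\<in>{0..vbar}. 0 < f x"
    and f_zero: "\<forall>x. x \<notin> {0..vbar} \<longrightarrow> f x = 0"
    and M_def: "M = density lborel (\<lambda>x. ennreal (f x))"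
    and M_prob: "prob_space M"
    and A_meas: "\<forall>i<n. (\<lambda>v. A v i) \<in> borel_measurable (val_space n M)"
    and A_01: "\<forall>v\<in>space (val_space n M). \<forall>i<n. A v i \<in> {0, 1}"
    and A_feas: "\<forall>v\<in>space (val_space n M). (\<Sum>i<n. A v i) \<le> 1"
    and A_win: "\<forall>v\<in>space (val_space n M). \<forall>i<n.
                  A v i = 1 \<longrightarrow> r \<le> v i \<and> (\<forall>j<n. v j \<le> v i)"
    and A_alloc: "\<forall>v\<in>space (val_space n M).
                  (\<exists>i<n. r \<le> v i) \<longrightarrow> (\<exists>i<n. A v i = 1)"
begin

abbreviation "V \<equiv> val_space n M"

lemma V_eq: "V = PiM {..<n} (\<lambda>_. M)" by (simp add: val_space_def)

lemma space_M[simp]: "space M = UNIV" by (simp add: M_def)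
lemma sets_M[simp]: "sets M = sets borel" by (simp add: M_def)

lemma space_V: "space V = {..<n} \<rightarrow>\<^sub>E UNIV"
  by (simp add: V_eq space_PiM)

lemma upd_space: "w \<in> space V \<Longrightarrow> i < n \<Longrightarrow> w(i := t) \<in> space V"
  by (auto simp: space_V PiE_iff extensional_def)

sublocale Mp: prob_space M by (rule M_prob)
sublocale Vp: prob_space V unfolding V_eq by (rule prob_space_PiM) (rule M_prob)
sublocale PS: product_sigma_finite "\<lambda>_. M"
  unfolding product_sigma_finite_def by (auto intro: Mp.sigma_finite_measure)
sublocale MV: pair_sigma_finite M V
  by (intro pair_sigma_finite.intro Mp.sigma_finite_measure Vp.sigma_finite_measure)

lemma upd_meas: "i < n \<Longrightarrow> (\<lambda>p. (snd p)(i := fst p)) \<in> measurable (M \<Otimes>\<^sub>M V) V"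
  unfolding V_eq
  by (rule measurable_fun_upd[where J="{..<n}"]) auto

lemma upd_meas1: "i < n \<Longrightarrow> (\<lambda>w. w(i := t)) \<in> measurable V V"
  unfolding V_eq
  by (rule measurable_fun_upd[where J="{..<n}"]) auto

lemma distr_upd: assumes i: "i < n"
  shows "distr (M \<Otimes>\<^sub>M V) V (\<lambda>p. (snd p)(i := fst p)) = V"
proof -
  have "distr (M \<Otimes>\<^sub>M V) V (\<lambda>p. (snd p)(i := fst p)) = PiM {..<n} (\<lambda>_. M)"
  proof (rule PS.PiM_eqI)
    show "sets (distr (M \<Otimes>\<^sub>M V) V (\<lambda>p. (snd p)(i := fst p))) = sets (PiM {..<n} (\<lambda>_. M))"
      by (simp add: V_eq)
  next
    fix B assume B: "\<And>j. j \<in> {..<n} \<Longrightarrow> B j \<in> sets M"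
    have B': "\<And>j. j < n \<Longrightarrow> (B(i:=UNIV)) j \<in> sets M" using B by auto
    have pre: "(\<lambda>p. (snd p)(i := fst p)) -` PiE {..<n} B \<inter> space (M \<Otimes>\<^sub>M V)
       = B i \<times> PiE {..<n} (B(i:=UNIV))"
    proof (rule set_eqI)
      fix p :: "real \<times> (nat \<Rightarrow> real)"
      obtain t w where p: "p = (t, w)" by (cases p)
      show "p \<in> (\<lambda>p. (snd p)(i := fst p)) -` PiE {..<n} B \<inter> space (M \<Otimes>\<^sub>M V)
        \<longleftrightarrow> p \<in> B i \<times> PiE {..<n} (B(i:=UNIV))"
        using upd_PiE_iff[of i "{..<n}" w t B] i
        by (simp add: p space_pair_measure space_V)
    qed
    have "emeasure (distr (M \<Otimes>\<^sub>M V) V (\<lambda>p. (snd p)(i := fst p))) (PiE {..<n} B)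
        = emeasure (M \<Otimes>\<^sub>M V) (B i \<times> PiE {..<n} (B(i:=UNIV)))"
    proof -
      have "PiE {..<n} B \<in> sets V" unfolding V_eq using B by (intro sets_PiM_I_finite) auto
      then show ?thesis by (subst emeasure_distr[OF upd_meas[OF i]]) (simp_all add: pre)
    qed
    also have "\<dots> = emeasure M (B i) * emeasure V (PiE {..<n} (B(i:=UNIV)))"
      using B B' i by (intro Vp.emeasure_pair_measure_Times) (auto simp: V_eq intro!: sets_PiM_I_finite)
    also have "emeasure V (PiE {..<n} (B(i:=UNIV))) = (\<Prod>j\<in>{..<n}. emeasure M ((B(i:=UNIV)) j))"
      unfolding V_eq using B' by (intro PS.emeasure_PiM) auto
    also have "\<dots> = (\<Prod>j\<in>{..<n}-{i}. emeasure M (B j))"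
      using i by (subst prod.remove[of _ i]) (auto simp: Mp.emeasure_space_1[simplified] intro!: prod.cong)
    also have "emeasure M (B i) * \<dots> = (\<Prod>j\<in>{..<n}. emeasure M (B j))"
      using i by (subst (2) prod.remove[of _ i]) auto
    finally show "emeasure (distr (M \<Otimes>\<^sub>M V) V (\<lambda>p. (snd p)(i := fst p))) (PiE {..<n} B)
        = (\<Prod>j\<in>{..<n}. emeasure M (B j))" .
  qed auto
  then show ?thesis by (simp add: V_eq)
qed

lemma integral_disint:
  fixes h :: "(nat \<Rightarrow> real) \<Rightarrow> real"
  assumes i: "i < n" and h: "integrable V h"
  shows "integral\<^sup>L V h = (\<integral>t. (\<integral>w. h (w(i := t)) \<partial>V) \<partial>M)"
proof -
  have hm: "h \<in> borel_measurable V" using h by auto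
  have "integral\<^sup>L V h = integral\<^sup>L (distr (M \<Otimes>\<^sub>M V) V (\<lambda>p. (snd p)(i := fst p))) h"
    by (simp add: distr_upd i)
  also have "\<dots> = integral\<^sup>L (M \<Otimes>\<^sub>M V) (\<lambda>p. h ((snd p)(i := fst p)))"
    by (rule integral_distr[OF upd_meas[OF i] hm])
  also have "\<dots> = (\<integral>t. (\<integral>w. h (w(i := t)) \<partial>V) \<partial>M)"
  proof -
    have "integrable (M \<Otimes>\<^sub>M V) (\<lambda>p. h ((snd p)(i := fst p)))"
      using h by (subst integrable_distr_eq[OF upd_meas[OF i] hm, symmetric]) (simp add: distr_upd i)
    from MV.integral_fst'[OF this] show ?thesis by simp
  qed
  finally show ?thesis .
qed

lemma nn_integral_disint:
  fixes h :: "(nat \<Rightarrow> real) \<Rightarrow> ennreal"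
  assumes i: "i < n" and hm: "h \<in> borel_measurable V"
  shows "integral\<^sup>N V h = (\<integral>\<^sup>+t. (\<integral>\<^sup>+w. h (w(i := t)) \<partial>V) \<partial>M)"
proof -
  have "integral\<^sup>N V h = integral\<^sup>N (distr (M \<Otimes>\<^sub>M V) V (\<lambda>p. (snd p)(i := fst p))) h"
    by (simp add: distr_upd i)
  also have "\<dots> = integral\<^sup>N (M \<Otimes>\<^sub>M V) (\<lambda>p. h ((snd p)(i := fst p)))"
    by (rule nn_integral_distr[OF upd_meas[OF i]]) (simp add: distr_upd i hm)
  also have "\<dots> = (\<integral>\<^sup>+t. (\<integral>\<^sup>+w. h (w(i := t)) \<partial>V) \<partial>M)"
    using Vp.nn_integral_fst[of "\<lambda>p. h ((snd p)(i := fst p))" M] upd_meas[OF i] hm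
    by simp
  finally show ?thesis .
qed

lemma f_ennreal_meas: "(\<lambda>x. ennreal (f x)) \<in> borel_measurable lborel"
  using f_meas by measurable

lemma M_singleton: "emeasure M {t} = 0"
  unfolding M_def using f_ennreal_meas
  by (subst emeasure_density) (auto simp: f_ennreal_meas)

lemma AE_M_range: "AE t in M. t \<in> {0..vbar}"
  unfolding M_def using f_ennreal_meas f_zero
  by (subst AE_density) (auto intro!: AE_I2)

lemma AE_M_neq: "AE s in M. s \<noteq> t"
  by (rule AE_I[where N="{t}"]) (auto simp: M_singleton)

lemma AE_coord:
  assumes i: "i < n" and P: "AE t in M. P t"
  shows "AE w in V. P (w i)"
proof -
  have d: "distr V M (\<lambda>w. w i) = M"
    unfolding V_eq by (rule distr_PiM_component) (use i M_prob in auto)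
  have m: "(\<lambda>w. w i) \<in> measurable V M" unfolding V_eq by (rule measurable_component_singleton) (use i in auto)
  show ?thesis by (rule AE_distrD[OF m]) (subst d, rule P)
qed

definition X :: "real \<Rightarrow> real" where
  "X t = (if r \<le> t then measure M {..<t} ^ (n-1) else 0)"

lemma alloc_pt:
  assumes w: "w \<in> space V" and ne: "\<forall>j<n. w j \<noteq> t" and i: "i < n"
  shows "A (w(i:=t)) i = (if r \<le> t then indicator (PiE {..<n} (\<lambda>j. if j = i then UNIV else {..<t})) w else 0)"
proof -
  let ?u = "w(i:=t)"
  let ?E = "PiE {..<n} (\<lambda>j. if j = i then UNIV else {..<t})"
  have u: "?u \<in> space V" using upd_space[OF w i] .
  have Eiff: "w \<in> ?E \<longleftrightarrow> (\<forall>j<n. j \<noteq> i \<longrightarrow> w j < t)"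
    using w by (auto simp: space_V PiE_iff)
  show ?thesis
  proof (cases "r \<le> t \<and> (\<forall>j<n. j \<noteq> i \<longrightarrow> w j < t)")
    case True
    then have "\<exists>k<n. r \<le> ?u k" using i by auto
    with A_alloc u obtain k where k: "k < n" "A ?u k = 1" by blast
    with A_win u have le: "\<forall>j<n. ?u j \<le> ?u k" by blast
    have "k = i"
    proof (rule ccontr)
      assume "k \<noteq> i"
      then have "w k < t" using True k by auto
      moreover have "t \<le> ?u k" using le i by (metis fun_upd_same)
      ultimately show False using \<open>k \<noteq> i\<close> by auto
    qed
    then show ?thesis using k True Eiff by simp
  next
    case False
    have "A ?u i \<noteq> 1"
    proof
      assume "A ?u i = 1"
      then have "r \<le> ?u i \<and> (\<forall>j<n. ?u j \<le> ?u i)" using A_win u i by blast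
      then have h: "r \<le> t" "\<forall>j<n. ?u j \<le> t" by auto
      have "\<forall>j<n. j \<noteq> i \<longrightarrow> w j < t"
      proof (intro allI impI)
        fix j assume "j < n" "j \<noteq> i"
        then have "w j \<le> t" using h(2) by (metis fun_upd_other)
        then show "w j < t" using ne \<open>j < n\<close> by force
      qed
      then show False using False h by blast
    qed
    then have "A ?u i = 0" using A_01 u i by blast
    then show ?thesis using False Eiff by auto
  qed
qed

lemma alloc_eq:
  assumes i: "i < n"
  shows "interim_alloc n M A i t = X t"
proof -
  let ?E = "PiE {..<n} (\<lambda>j. if j = i then UNIV else {..<t})"
  have ae: "AE w in V. A (w(i:=t)) i = (if r \<le> t then indicator ?E w else 0)"
  proof -
    have "AE w in V. \<forall>j\<in>{..<n}. w j \<noteq> t"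
      by (rule AE_finite_allI) (auto intro: AE_coord AE_M_neq)
    then show ?thesis using AE_space[of V]
      by eventually_elim (metis alloc_pt[OF _ _ i] lessThan_iff)
  qed
  have "interim_alloc n M A i t = (\<integral>w. A (w(i:=t)) i \<partial>V)"
    by (simp add: interim_alloc_def interim_def)
  also have "\<dots> = (\<integral>w. (if r \<le> t then indicator ?E w else 0) \<partial>V)"
  proof (rule integral_cong_AE)
    have "?E \<in> sets V" unfolding V_eq by (intro sets_PiM_I_finite) auto
    then show "(\<lambda>w. if r \<le> t then indicator ?E w else 0 :: real) \<in> borel_measurable V" by simp
  qed (use ae upd_meas1[OF i] A_meas i in \<open>auto\<close>)
  also have "\<dots> = (if r \<le> t then measure V ?E else 0)"
  proof -
    have "?E \<in> sets V" unfolding V_eq by (intro sets_PiM_I_finite) auto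
    then show ?thesis by (cases "r \<le> t") (auto simp: Int_absorb2 sets.sets_into_space)
  qed
  also have "measure V ?E = measure M {..<t} ^ (n-1)"
  proof -
    have "emeasure V ?E = (\<Prod>j\<in>{..<n}. emeasure M (if j = i then UNIV else {..<t}))"
      unfolding V_eq by (intro PS.emeasure_PiM) auto
    also have "\<dots> = (\<Prod>j\<in>{..<n}-{i}. emeasure M {..<t})"
      using i by (subst prod.remove[of _ i]) (auto simp: Mp.emeasure_space_1[simplified] intro!: prod.cong)
    also have "\<dots> = emeasure M {..<t} ^ (n-1)"
      using i by simp
    also have "\<dots> = ennreal (measure M {..<t} ^ (n-1))"
      by (simp add: Mp.emeasure_eq_measure ennreal_power)
    finally show ?thesis by (simp add: Vp.emeasure_eq_measure)
  qed
  finally show ?thesis by (simp add: X_def)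
qed


lemma X_nonneg: "0 \<le> X t" by (simp add: X_def)
lemma X_le1: "X t \<le> 1"
  by (simp add: X_def power_le_one)
lemma X_pos: "0 < X t \<Longrightarrow> r \<le> t"
  by (simp add: X_def split: if_splits)
lemma X_mono: "mono X"
proof (rule monoI)
  fix s t :: real assume st: "s \<le> t"
  show "X s \<le> X t"
  proof (cases "r \<le> s")
    case True
    then have "measure M {..<s} \<le> measure M {..<t}"
      using st by (intro Mp.finite_measure_mono) auto
    then show ?thesis using True st by (simp add: X_def power_mono)
  qed (simp add: X_def)
qed
lemma X_neg: "t < 0 \<Longrightarrow> X t = 0"
  using X_pos[of t] X_nonneg[of t] r by linarith

lemma X_le: "s \<le> t \<Longrightarrow> X s \<le> X t" using X_mono by (simp add: mono_def)
lemma X_borel[measurable]: "X \<in> borel_measurable borel"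
  by (rule borel_measurable_mono[OF X_mono])

definition II :: "real \<Rightarrow> real" where
  "II t = (LINT u:{0..t}|lborel. X u)"

lemma fin_S: "(S::real set) \<in> sets borel \<Longrightarrow> S \<subseteq> {a..b} \<Longrightarrow> emeasure lborel S < \<infinity>"
proof -
  assume S: "S \<in> sets borel" "S \<subseteq> {a..b}"
  have "emeasure lborel S \<le> emeasure lborel {a..b}"
    using S(2) by (rule emeasure_mono) (simp add: atLeastAtMost_borel)
  also have "\<dots> < \<infinity>" by (simp add: emeasure_lborel_Icc_eq)
  finally show ?thesis .
qed

lemma X_setint: "(S::real set) \<in> sets borel \<Longrightarrow> S \<subseteq> {a..b} \<Longrightarrow> set_integrable lborel S X"
  unfolding set_integrable_def
proof (rule integrableI_bounded_set[where A=S and B=1])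
  assume "S \<in> sets borel" "S \<subseteq> {a..b}"
  then show "emeasure lborel S < \<infinity>" by (rule fin_S)
next
  show "AE x in lborel. x \<in> S \<longrightarrow> norm (indicat_real S x *\<^sub>R X x) \<le> 1"
    using X_nonneg X_le1 by (intro AE_I2) (simp add: indicator_def)
next
  show "AE x in lborel. x \<notin> S \<longrightarrow> indicat_real S x *\<^sub>R X x = 0"
    by (intro AE_I2) simp
qed auto

lemma bounds_gen:
  assumes S: "S \<in> sets borel" "S \<subseteq> {a..c}" and ac: "a \<le> c"
  shows "measure lborel S * X a \<le> (LINT u:S|lborel. X u)"
    and "(LINT u:S|lborel. X u) \<le> measure lborel S * X c"
proof -
  have fin: "emeasure lborel S \<noteq> \<infinity>"
    using fin_S[OF S] by simp
  have ci: "set_integrable lborel S (\<lambda>_. c0)" for c0 :: real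
    unfolding set_integrable_def
  proof (rule integrableI_bounded_set[where A=S and B="abs c0"])
    show "AE x in lborel. x \<in> S \<longrightarrow> norm (indicat_real S x *\<^sub>R c0) \<le> abs c0"
      by (intro AE_I2) (simp add: indicator_def)
    show "AE x in lborel. x \<notin> S \<longrightarrow> indicat_real S x *\<^sub>R c0 = 0"
      by (intro AE_I2) simp
  qed (use S fin in \<open>auto simp: less_top\<close>)
  have "measure lborel S * X a = (LINT u:S|lborel. X a)"
    using S fin by (simp add: set_integral_const)
  also have "\<dots> \<le> (LINT u:S|lborel. X u)"
    using S by (intro set_integral_mono ci X_setint[OF S]) (metis S(2) X_le atLeastAtMost_iff subsetD)
  finally show "measure lborel S * X a \<le> (LINT u:S|lborel. X u)" .
  have "(LINT u:S|lborel. X u) \<le> (LINT u:S|lborel. X c)"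
    using S by (intro set_integral_mono ci X_setint[OF S]) (metis S(2) X_le atLeastAtMost_iff subsetD)
  also have "\<dots> = measure lborel S * X c"
    using S fin by (simp add: set_integral_const)
  finally show "(LINT u:S|lborel. X u) \<le> measure lborel S * X c" .
qed

lemma Ioc_bounds:
  assumes "a \<le> c"
  shows "(c - a) * X a \<le> (LINT u:{a<..c}|lborel. X u)"
    and "(LINT u:{a<..c}|lborel. X u) \<le> (c - a) * X c"
proof -
  have s: "{a<..c} \<subseteq> {a..c}" "{a<..c} \<in> sets borel" by auto
  have m: "measure lborel {a<..c} = c - a" using assms by simp
  show "(c - a) * X a \<le> (LINT u:{a<..c}|lborel. X u)"
    using bounds_gen(1)[OF s(2) s(1) assms] m by simp
  show "(LINT u:{a<..c}|lborel. X u) \<le> (c - a) * X c"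
    using bounds_gen(2)[OF s(2) s(1) assms] m by simp
qed

lemma Icc_bounds:
  assumes "a \<le> c"
  shows "(c - a) * X a \<le> (LINT u:{a..c}|lborel. X u)"
    and "(LINT u:{a..c}|lborel. X u) \<le> (c - a) * X c"
proof -
  have s: "{a..c} \<subseteq> {a..c}" "{a..c} \<in> sets borel" by auto
  have m: "measure lborel {a..c} = c - a" using assms by simp
  show "(c - a) * X a \<le> (LINT u:{a..c}|lborel. X u)"
    using bounds_gen(1)[OF s(2) s(1) assms] m by simp
  show "(LINT u:{a..c}|lborel. X u) \<le> (c - a) * X c"
    using bounds_gen(2)[OF s(2) s(1) assms] m by simp
qed

lemma II_split:
  assumes "0 \<le> a" "a \<le> c"
  shows "II c = II a + (LINT u:{a<..c}|lborel. X u)"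
proof -
  have "{0..c} = {0..a} \<union> {a<..c}" using assms by auto
  moreover have "set_integrable lborel {0..a} X" using assms by (intro X_setint[of _ 0 c]) auto
  moreover have "set_integrable lborel {a<..c} X" using assms by (intro X_setint[of _ 0 c]) auto
  moreover have "{0..a} \<inter> {a<..c} = {}" by auto
  ultimately show ?thesis unfolding II_def
    by (simp add: set_integral_Un)
qed

lemma II_bounds: "0 \<le> t \<Longrightarrow> 0 \<le> II t \<and> II t \<le> t * X t"
proof -
  assume t: "0 \<le> t"
  have a: "(t - 0) * X 0 \<le> II t" using Icc_bounds(1)[OF t] by (simp add: II_def)
  have b: "II t \<le> (t - 0) * X t" using Icc_bounds(2)[OF t] by (simp add: II_def)
  have "0 \<le> t * X 0" using t X_nonneg[of 0] by simp
  then show ?thesis using a b by simp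
qed

lemma II_neg: "t < 0 \<Longrightarrow> II t = 0"
  by (simp add: II_def set_lebesgue_integral_def)

definition Z :: "real \<Rightarrow> real" where "Z t = t * X t - II t"
definition B :: "real \<Rightarrow> real" where "B t = (if 0 < X t then Z t / X t else 0)"

lemma Z_nonneg: "0 \<le> Z t"
  using II_bounds[of t] II_neg[of t] X_neg[of t] by (cases "0 \<le> t") (auto simp: Z_def)

lemma X0_Z0: "X t = 0 \<Longrightarrow> Z t = 0"
  using II_bounds[of t] II_neg[of t] by (cases "0 \<le> t") (auto simp: Z_def)

lemma BX: "B t * X t = Z t"
  using X_nonneg[of t] X0_Z0[of t] by (auto simp: B_def)

lemma B_nonneg: "0 \<le> B t"
  using Z_nonneg[of t] by (auto simp: B_def)

lemma B_le: "0 \<le> t \<Longrightarrow> B t \<le> t"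
  using II_bounds[of t] by (auto simp: B_def Z_def divide_le_eq)

lemma B_mono: "mono B"
proof (rule monoI)
  fix s t :: real assume st: "s \<le> t"
  show "B s \<le> B t"
  proof (cases "0 < X s")
    case False then show ?thesis using B_nonneg[of t] by (simp add: B_def)
  next
    case True
    have s0: "0 \<le> s" using X_pos[OF True] r by simp
    have Xt: "X s \<le> X t" using X_le[OF st] .
    with True have Xt0: "0 < X t" by simp
    define J where "J = (LINT u:{s<..t}|lborel. X u)"
    have It: "II t = II s + J" using II_split[OF s0 st] by (simp add: J_def)
    have J: "J \<le> (t - s) * X t" using Ioc_bounds(2)[OF st] by (simp add: J_def)
    have Is: "0 \<le> II s" using II_bounds[OF s0] by simp
    have Bs: "B s = s - II s / X s" using True by (simp add: B_def Z_def diff_divide_distrib)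
    have Bt: "B t = t - II s / X t - J / X t" using Xt0 It by (simp add: B_def Z_def diff_divide_distrib add_divide_distrib)
    have "II s / X t \<le> II s / X s" using Is True Xt by (intro divide_left_mono) auto
    moreover have "J / X t \<le> t - s" using J Xt0 by (simp add: divide_le_eq)
    ultimately show ?thesis using Bs Bt by linarith
  qed
qed

lemma B_le': "s \<le> t \<Longrightarrow> B s \<le> B t" using B_mono by (simp add: mono_def)

lemma B_borel[measurable]: "B \<in> borel_measurable borel"
  by (rule borel_measurable_mono[OF B_mono])

lemma BIC_ineq:
  assumes "0 \<le> t" "0 \<le> t'"
  shows "t * X t' - Z t' \<le> t * X t - Z t"
proof (cases "t' \<le> t")
  case True
  have "II t = II t' + (LINT u:{t'<..t}|lborel. X u)" by (rule II_split) (use assms True in auto)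
  moreover have "(t - t') * X t' \<le> (LINT u:{t'<..t}|lborel. X u)" using Ioc_bounds(1)[OF True] .
  ultimately show ?thesis unfolding Z_def left_diff_distrib by linarith
next
  case False
  then have le: "t \<le> t'" by simp
  have "II t' = II t + (LINT u:{t<..t'}|lborel. X u)" by (rule II_split) (use assms le in auto)
  moreover have "(LINT u:{t<..t'}|lborel. X u) \<le> (t' - t) * X t'" using Ioc_bounds(2)[OF le] .
  ultimately show ?thesis unfolding Z_def left_diff_distrib by linarith
qed


lemma alloc_fun: "i < n \<Longrightarrow> interim_alloc n M A i = X"
  by (rule ext) (rule alloc_eq)

lemma pay_eq: "i < n \<Longrightarrow> interim_pay n M A i t = Z t"
  by (simp add: interim_pay_def alloc_fun Z_def II_def)

lemma bid_eq: "i < n \<Longrightarrow> bid_wpb n M A i t = B t"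
  using BX[of t] X_nonneg[of t] by (auto simp: bid_wpb_def alloc_fun pay_eq B_def)

lemma wpb_eq: "i < n \<Longrightarrow> pay_wpb n M A v i = B (v i) * A v i"
  by (simp add: pay_wpb_def bid_eq)

lemma coord_meas: "i < n \<Longrightarrow> (\<lambda>v. v i) \<in> borel_measurable V"
proof -
  assume i: "i < n"
  have "(\<lambda>v. v i) \<in> measurable V M" unfolding V_eq
    by (rule measurable_component_singleton) (use i in auto)
  moreover have "measurable V M = measurable V borel" by (rule measurable_cong_sets) auto
  ultimately show ?thesis by simp
qed

lemma A_upd_int: "i < n \<Longrightarrow> integrable V (\<lambda>w. A (w(i:=s)) i)"
proof -
  assume i: "i < n"
  have m: "(\<lambda>w. A (w(i:=s)) i) \<in> borel_measurable V"
    using measurable_compose[OF upd_meas1[OF i], of "\<lambda>v. A v i" borel] A_meas i by auto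
  have "AE w in V. norm (A (w(i:=s)) i) \<le> 1"
    using AE_space[of V]
  proof eventually_elim
    case (elim w)
    then have "A (w(i:=s)) i \<in> {0,1}" using A_01 upd_space i by blast
    then show ?case by auto
  qed
  then show ?thesis using m by (intro Vp.integrable_const_bound[where B=1]) auto
qed

lemma interim_lin: "i < n \<Longrightarrow> (\<integral>w. c * A (w(i:=s)) i \<partial>V) = c * X s"
  using alloc_eq[of i s] by (simp add: interim_alloc_def interim_def)

lemma wpb_implements: "implements n M vbar A (pay_wpb n M A)"
  unfolding implements_def
proof (intro conjI allI impI ballI)
  fix i assume i: "i < n"
  show "(\<lambda>v. pay_wpb n M A v i) \<in> borel_measurable V"
  proof -
    have "(\<lambda>v. B (v i)) \<in> borel_measurable V"
      using measurable_compose[OF coord_meas[OF i] B_borel] .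
    then have "(\<lambda>v. B (v i) * A v i) \<in> borel_measurable V" using A_meas i by auto
    then show ?thesis by (simp add: wpb_eq[OF i])
  qed
next
  fix v i assume v: "v \<in> space V" and i: "i < n"
  show "0 \<le> pay_wpb n M A v i"
  proof -
    have "A v i \<in> {0,1}" using A_01 v i by blast
    then show ?thesis using B_nonneg[of "v i"] by (auto simp: wpb_eq[OF i])
  qed
next
  fix i t assume i: "i < n" and t: "t \<in> {0..vbar}"
  have "(\<lambda>w. pay_wpb n M A (w(i := t)) i) = (\<lambda>w. B t * A (w(i := t)) i)"
    by (simp add: wpb_eq[OF i])
  then show "integrable V (\<lambda>w. pay_wpb n M A (w(i := t)) i)"
    using A_upd_int[OF i] by simp
next
  fix i t t' assume i: "i < n" and t: "t \<in> {0..vbar}" and t': "t' \<in> {0..vbar}"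
  have L: "interim n M (\<lambda>v. v i * A v i - pay_wpb n M A v i) i t = t * X t - Z t"
  proof -
    have "interim n M (\<lambda>v. v i * A v i - pay_wpb n M A v i) i t
        = (\<integral>w. (t - B t) * A (w(i := t)) i \<partial>V)"
      unfolding interim_def by (rule Bochner_Integration.integral_cong) (auto simp: wpb_eq[OF i] algebra_simps)
    also have "\<dots> = (t - B t) * X t" by (rule interim_lin[OF i])
    finally show ?thesis using BX[of t] by (simp add: algebra_simps)
  qed
  have R: "interim n M (\<lambda>v. v i * A (v(i := t')) i - pay_wpb n M A (v(i := t')) i) i t
      = t * X t' - Z t'"
  proof -
    have "interim n M (\<lambda>v. v i * A (v(i := t')) i - pay_wpb n M A (v(i := t')) i) i t
        = (\<integral>w. (t - B t') * A (w(i := t')) i \<partial>V)"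
      unfolding interim_def by (rule Bochner_Integration.integral_cong) (auto simp: wpb_eq[OF i] algebra_simps)
    also have "\<dots> = (t - B t') * X t'" by (rule interim_lin[OF i])
    finally show ?thesis using BX[of t'] by (simp add: algebra_simps)
  qed
  show "interim n M (\<lambda>v. v i * A (v(i := t')) i - pay_wpb n M A (v(i := t')) i) i t
      \<le> interim n M (\<lambda>v. v i * A v i - pay_wpb n M A v i) i t"
    unfolding L R using BIC_ineq[of t t'] t t' by auto
next
  fix i t assume i: "i < n" and t: "t \<in> {0..vbar}"
  have "interim n M (\<lambda>v. pay_wpb n M A v i) i t = (\<integral>w. B t * A (w(i := t)) i \<partial>V)"
    unfolding interim_def by (rule Bochner_Integration.integral_cong) (auto simp: wpb_eq[OF i])
  also have "\<dots> = B t * X t" by (rule interim_lin[OF i])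
  finally show "interim n M (\<lambda>v. pay_wpb n M A v i) i t = interim_pay n M A i t"
    by (simp add: BX pay_eq[OF i])
qed


lemma Z_le: "t \<in> {0..vbar} \<Longrightarrow> Z t \<le> vbar"
proof -
  assume t: "t \<in> {0..vbar}"
  have "Z t \<le> t * X t" using II_bounds[of t] t by (simp add: Z_def)
  also have "\<dots> \<le> t * 1" using t X_le1[of t] by (intro mult_left_mono) auto
  finally show ?thesis using t by simp
qed

lemma impl_int:
  assumes Q: "implements n M vbar A Q" and i: "i < n"
  shows "integrable V (\<lambda>v. Q v i)"
proof (rule integrableI_nonneg)
  show Qm: "(\<lambda>v. Q v i) \<in> borel_measurable V" using Q i by (simp add: implements_def)
  show "AE v in V. 0 \<le> Q v i" using Q i AE_space[of V] by (auto simp: implements_def elim!: eventually_mono)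
  have "(\<integral>\<^sup>+v. ennreal (Q v i) \<partial>V) = (\<integral>\<^sup>+t. (\<integral>\<^sup>+w. ennreal (Q (w(i := t)) i) \<partial>V) \<partial>M)"
    using Qm by (intro nn_integral_disint[OF i]) auto
  also have "\<dots> \<le> (\<integral>\<^sup>+t. ennreal vbar \<partial>M)"
  proof (rule nn_integral_mono_AE)
    show "AE t in M. (\<integral>\<^sup>+w. ennreal (Q (w(i := t)) i) \<partial>V) \<le> ennreal vbar"
      using AE_M_range
    proof eventually_elim
      case (elim t)
      have int: "integrable V (\<lambda>w. Q (w(i := t)) i)" using Q i elim by (simp add: implements_def)
      have nn: "AE w in V. 0 \<le> Q (w(i := t)) i"
        using AE_space[of V] by eventually_elim (use Q i upd_space in \<open>auto simp: implements_def\<close>)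
      have "(\<integral>\<^sup>+w. ennreal (Q (w(i := t)) i) \<partial>V) = ennreal (\<integral>w. Q (w(i := t)) i \<partial>V)"
        by (rule nn_integral_eq_integral[OF int nn])
      also have "(\<integral>w. Q (w(i := t)) i \<partial>V) = Z t"
        using Q i elim by (simp add: implements_def interim_def pay_eq)
      finally have eq: "(\<integral>\<^sup>+w. ennreal (Q (w(i := t)) i) \<partial>V) = ennreal (Z t)" .
      show ?case unfolding eq by (rule ennreal_leI[OF Z_le[OF elim]])
    qed
  qed
  also have "\<dots> < \<infinity>" by (simp add: Mp.emeasure_space_1[simplified])
  finally show "(\<integral>\<^sup>+v. ennreal (Q v i) \<partial>V) < \<infinity>" .
qed

lemma AE_V_range: "AE v in V. \<forall>i<n. v i \<in> {0..vbar}"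
proof -
  have "AE v in V. \<forall>i\<in>{..<n}. v i \<in> {0..vbar}"
    using AE_coord[OF _ AE_M_range] by (intro AE_finite_allI) auto
  then show ?thesis by (rule eventually_mono) auto
qed

lemma phi_int:
  assumes Q: "implements n M vbar A Q" and i: "i < n"
    and phi: "phi \<in> borel_measurable borel" and K: "\<forall>t\<in>{0..vbar}. \<bar>phi t\<bar> \<le> K"
  shows "integrable V (\<lambda>v. phi (v i) * Q v i)"
    and "(\<integral>v. phi (v i) * Q v i \<partial>V) = (\<integral>t. phi t * (B t * X t) \<partial>M)"
proof -
  have Qi: "integrable V (\<lambda>v. Q v i)" by (rule impl_int[OF Q i])
  have Qm: "(\<lambda>v. Q v i) \<in> borel_measurable V" using Q i by (simp add: implements_def)
  have phim: "(\<lambda>v. phi (v i)) \<in> borel_measurable V"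
    using measurable_compose[OF coord_meas[OF i] phi] .
  have hm: "(\<lambda>v. phi (v i) * Q v i) \<in> borel_measurable V" using phim Qm by measurable
  have K0: "0 \<le> K" using K vbar by (metis abs_ge_zero atLeastAtMost_iff less_imp_le order_trans order_refl)
  show int: "integrable V (\<lambda>v. phi (v i) * Q v i)"
  proof (rule Bochner_Integration.integrable_bound[OF integrable_mult_right[OF Qi, of K] hm])
    show "AE v in V. norm (phi (v i) * Q v i) \<le> norm (K * Q v i)"
      using AE_V_range AE_space[of V]
    proof eventually_elim
      case (elim v)
      have "0 \<le> Q v i" using Q i elim by (simp add: implements_def)
      moreover have "\<bar>phi (v i)\<bar> \<le> K" using K elim i by auto
      ultimately show ?case using K0 by (simp add: abs_mult mult_right_mono)
    qed
  qed
  have "(\<integral>v. phi (v i) * Q v i \<partial>V) = (\<integral>t. (\<integral>w. phi ((w(i:=t)) i) * Q (w(i:=t)) i \<partial>V) \<partial>M)"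
    by (rule integral_disint[OF i int])
  also have "\<dots> = (\<integral>t. phi t * (B t * X t) \<partial>M)"
  proof (rule integral_cong_AE)
    have "(\<lambda>p. phi (((snd p)(i := fst p)) i) * Q ((snd p)(i := fst p)) i) \<in> borel_measurable (M \<Otimes>\<^sub>M V)"
      using measurable_compose[OF upd_meas[OF i] hm] .
    then have "case_prod (\<lambda>t w. phi ((w(i:=t)) i) * Q (w(i:=t)) i) \<in> borel_measurable (M \<Otimes>\<^sub>M V)"
      by (simp add: case_prod_beta')
    then show "(\<lambda>t. \<integral>w. phi ((w(i:=t)) i) * Q (w(i:=t)) i \<partial>V) \<in> borel_measurable M"
      by (rule Vp.borel_measurable_lebesgue_integral)
    have "(\<lambda>t. phi t * (B t * X t)) \<in> borel_measurable borel" using phi by measurable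
    then show "(\<lambda>t. phi t * (B t * X t)) \<in> borel_measurable M"
      by (subst measurable_cong_sets[of M borel]) auto
    show "AE t in M. (\<integral>w. phi ((w(i:=t)) i) * Q (w(i:=t)) i \<partial>V) = phi t * (B t * X t)"
      using AE_M_range
    proof eventually_elim
      case (elim t)
      have "(\<integral>w. phi ((w(i:=t)) i) * Q (w(i:=t)) i \<partial>V) = phi t * (\<integral>w. Q (w(i:=t)) i \<partial>V)"
        by simp
      also have "(\<integral>w. Q (w(i:=t)) i \<partial>V) = Z t"
        using Q i elim by (simp add: implements_def interim_def pay_eq)
      finally show ?case unfolding BX .
    qed
  qed
  finally show "(\<integral>v. phi (v i) * Q v i \<partial>V) = (\<integral>t. phi t * (B t * X t) \<partial>M)" .
qed

lemma sum_single:
  assumes "k < n" "A v k = 1" "\<forall>j<n. j \<noteq> k \<longrightarrow> A v j = 0"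
  shows "(\<Sum>j<n. c j * A v j) = c k"
proof -
  have "(\<Sum>j<n. c j * A v j) = c k * A v k + (\<Sum>j\<in>{..<n}-{k}. c j * A v j)"
    using assms by (subst sum.remove[of _ k]) auto
  also have "(\<Sum>j\<in>{..<n}-{k}. c j * A v j) = 0" using assms by (intro sum.neutral) auto
  finally show ?thesis using assms by simp
qed

lemma winner_cases:
  assumes v: "v \<in> space V"
  shows "(\<exists>k<n. A v k = 1 \<and> (\<forall>j<n. j \<noteq> k \<longrightarrow> A v j = 0)) \<or> (\<forall>j<n. A v j = 0 \<and> v j < r)"
proof (cases "\<exists>k<n. A v k = 1")
  case True
  then obtain k where k: "k < n" "A v k = 1" by blast
  have "\<forall>j<n. j \<noteq> k \<longrightarrow> A v j = 0"
  proof (intro allI impI)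
    fix j assume j: "j < n" "j \<noteq> k"
    have nn: "\<forall>i\<in>{..<n}. 0 \<le> A v i" using A_01 v by fastforce
    have "(\<Sum>i\<in>{k,j}. A v i) \<le> (\<Sum>i<n. A v i)"
      using k j nn by (intro sum_mono2) auto
    then have "A v k + A v j \<le> 1" using A_feas v j by auto
    then have "A v j \<le> 0" using k by simp
    moreover have "A v j \<in> {0,1}" using A_01 v j by blast
    ultimately show "A v j = 0" by auto
  qed
  then show ?thesis using k by blast
next
  case False
  then have "\<forall>j<n. A v j = 0" using A_01 v by blast
  moreover have "\<forall>j<n. v j < r" using A_alloc v False by (meson not_le)
  ultimately show ?thesis by blast
qed

lemma B_below_r: "t < r \<Longrightarrow> B t = 0"
  using X_pos[of t] by (auto simp: B_def)

lemma S_facts: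
  assumes v: "v \<in> space V"
  defines "S \<equiv> (\<Sum>j<n. B (v j) * A v j)"
  shows "\<forall>i<n. B (v i) \<le> S"
    and "(\<Sum>j<n. c (B (v j)) * (B (v j) * A v j)) = c S * S"
    and "(\<forall>i<n. v i \<in> {0..vbar}) \<longrightarrow> S \<in> {0..vbar}"
proof -
  consider (win) k where "k < n" "A v k = 1" "\<forall>j<n. j \<noteq> k \<longrightarrow> A v j = 0"
    | (none) "\<forall>j<n. A v j = 0 \<and> v j < r"
    using winner_cases[OF v] by blast
  then have "(\<forall>i<n. B (v i) \<le> S) \<and> (\<Sum>j<n. c (B (v j)) * (B (v j) * A v j)) = c S * S
     \<and> ((\<forall>i<n. v i \<in> {0..vbar}) \<longrightarrow> S \<in> {0..vbar})"
  proof cases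
    case win
    note k = win
    have Sk: "S = B (v k)" unfolding S_def by (rule sum_single[OF k])
    have "\<forall>j<n. v j \<le> v k" using A_win v k by blast
    then have 1: "\<forall>i<n. B (v i) \<le> S" by (auto simp: Sk intro: B_le')
    have "(\<Sum>j<n. c (B (v j)) * (B (v j) * A v j)) = (\<Sum>j<n. (c (B (v j)) * B (v j)) * A v j)"
      by (simp add: mult.assoc)
    also have "\<dots> = c (B (v k)) * B (v k)" by (rule sum_single[OF k])
    finally have 2: "(\<Sum>j<n. c (B (v j)) * (B (v j) * A v j)) = c S * S" by (simp add: Sk)
    have 3: "(\<forall>i<n. v i \<in> {0..vbar}) \<longrightarrow> S \<in> {0..vbar}"
      using B_nonneg[of "v k"] B_le[of "v k"] k by (auto simp: Sk)
    show ?thesis using 1 2 3 by blast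
  next
    case none
    note h = none
    have S0: "S = 0" unfolding S_def using h by simp
    have 1: "\<forall>i<n. B (v i) \<le> S" using h B_below_r by (simp add: S0)
    have 2: "(\<Sum>j<n. c (B (v j)) * (B (v j) * A v j)) = c S * S" using h by (simp add: S0)
    have 3: "(\<forall>i<n. v i \<in> {0..vbar}) \<longrightarrow> S \<in> {0..vbar}" using vbar by (simp add: S0)
    show ?thesis using 1 2 3 by blast
  qed
  then show "\<forall>i<n. B (v i) \<le> S"
    and "(\<Sum>j<n. c (B (v j)) * (B (v j) * A v j)) = c S * S"
    and "(\<forall>i<n. v i \<in> {0..vbar}) \<longrightarrow> S \<in> {0..vbar}" by blast+
qed

lemma main_ineq:
  assumes P: "implements n M vbar A P" and g: "convex_on UNIV g"
    and iP: "integrable V (\<lambda>v. g (\<Sum>i<n. P v i))"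
    and iW: "integrable V (\<lambda>v. g (\<Sum>i<n. pay_wpb n M A v i))"
  shows "(\<integral>v. g (\<Sum>i<n. pay_wpb n M A v i) \<partial>V) \<le> (\<integral>v. g (\<Sum>i<n. P v i) \<partial>V)"
proof -
  obtain D where Dm: "mono D" and Dt: "\<And>x y. g y + D y * (x - y) \<le> g x"
    using convex_subgrad[OF g] by blast
  have Db: "D \<in> borel_measurable borel" by (rule borel_measurable_mono[OF Dm])
  define S where "S v = (\<Sum>j<n. B (v j) * A v j)" for v
  define T where "T v = (\<Sum>i<n. P v i)" for v
  have SW: "(\<Sum>i<n. pay_wpb n M A v i) = S v" for v by (simp add: S_def wpb_eq)
  define K where "K = \<bar>D 0\<bar> + \<bar>D vbar\<bar>"
  have K0: "0 \<le> K" by (simp add: K_def)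
  have DK: "\<bar>D y\<bar> \<le> K" if "y \<in> {0..vbar}" for y
  proof -
    have "D 0 \<le> D y" "D y \<le> D vbar" using that monoD[OF Dm] by auto
    then show ?thesis unfolding K_def by linarith
  qed
  have phiK: "\<forall>t\<in>{0..vbar}. \<bar>D (B t)\<bar> \<le> K"
  proof
    fix t :: real assume t: "t \<in> {0..vbar}"
    have "B t \<in> {0..vbar}" using B_nonneg[of t] B_le[of t] t by auto
    then show "\<bar>D (B t)\<bar> \<le> K" by (rule DK)
  qed
  have phim: "(\<lambda>t. D (B t)) \<in> borel_measurable borel"
    using measurable_compose[OF B_borel Db] .
  have Wm: "(\<lambda>v. \<Sum>i<n. pay_wpb n M A v i) \<in> borel_measurable V"
    by (rule borel_measurable_sum) (use wpb_implements in \<open>simp add: implements_def\<close>)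
  then have Sm: "S \<in> borel_measurable V" by (simp add: SW)
  have Tm: "T \<in> borel_measurable V" unfolding T_def
    by (rule borel_measurable_sum) (use P in \<open>simp add: implements_def\<close>)
  have Tint: "integrable V T"
  proof -
    have "integrable V (\<lambda>v. \<Sum>i\<in>{..<n}. (\<lambda>i v. P v i) i v)"
      by (rule Bochner_Integration.integrable_sum) (use impl_int[OF P] in auto)
    then show ?thesis unfolding T_def by simp
  qed
  have Tnn: "0 \<le> T v" if "v \<in> space V" for v
    unfolding T_def using P that by (intro sum_nonneg) (simp add: implements_def)
  have SK: "AE v in V. S v \<in> {0..vbar}"
    using AE_V_range AE_space[of V] by eventually_elim (use S_facts(3) in \<open>auto simp: S_def\<close>)
  have DSm: "(\<lambda>v. D (S v)) \<in> borel_measurable V" using measurable_compose[OF Sm Db] .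
  have int1: "integrable V (\<lambda>v. D (S v) * T v)"
  proof (rule Bochner_Integration.integrable_bound[OF integrable_mult_right[OF Tint, of K]])
    show "(\<lambda>v. D (S v) * T v) \<in> borel_measurable V" using DSm Tm by measurable
    show "AE v in V. norm (D (S v) * T v) \<le> norm (K * T v)"
      using SK AE_space[of V]
    proof eventually_elim
      case (elim v)
      then have "\<bar>D (S v)\<bar> \<le> K" "0 \<le> T v" using DK Tnn by auto
      then show ?case using K0 by (simp add: abs_mult mult_right_mono)
    qed
  qed
  have int2: "integrable V (\<lambda>v. D (S v) * S v)"
  proof (rule Vp.integrable_const_bound[where B="K * vbar"])
    show "(\<lambda>v. D (S v) * S v) \<in> borel_measurable V" using DSm Sm by measurable
    show "AE v in V. norm (D (S v) * S v) \<le> K * vbar"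
      using SK
    proof eventually_elim
      case (elim v)
      then have "\<bar>D (S v)\<bar> \<le> K" "\<bar>S v\<bar> \<le> vbar" using DK by auto
      then show ?case by (simp add: abs_mult mult_mono)
    qed
  qed
  have iS: "integrable V (\<lambda>v. g (S v))" using iW by (simp add: SW)
  have iT: "integrable V (\<lambda>v. g (T v))" using iP by (simp add: T_def)
  have step1: "(\<integral>v. g (S v) + D (S v) * T v - D (S v) * S v \<partial>V) \<le> (\<integral>v. g (T v) \<partial>V)"
  proof (rule integral_mono)
    show "integrable V (\<lambda>v. g (S v) + D (S v) * T v - D (S v) * S v)"
      using iS int1 int2 by auto
    show "integrable V (\<lambda>v. g (T v))" by (rule iT)
    fix v assume "v \<in> space V"
    show "g (S v) + D (S v) * T v - D (S v) * S v \<le> g (T v)"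
      using Dt[of "S v" "T v"] by (simp add: right_diff_distrib)
  qed
  have step2: "(\<integral>v. g (S v) + D (S v) * T v - D (S v) * S v \<partial>V)
      = (\<integral>v. g (S v) \<partial>V) + (\<integral>v. D (S v) * T v \<partial>V) - (\<integral>v. D (S v) * S v \<partial>V)"
    using iS int1 int2 by (simp add: Bochner_Integration.integral_diff Bochner_Integration.integral_add)
  have ph: "integrable V (\<lambda>v. D (B (v i)) * Q v i)"
    "(\<integral>v. D (B (v i)) * Q v i \<partial>V) = (\<integral>t. D (B t) * (B t * X t) \<partial>M)"
    if "implements n M vbar A Q" "i < n" for Q i
    using phi_int[OF that phim phiK] by auto
  have step3: "(\<Sum>i<n. \<integral>v. D (B (v i)) * P v i \<partial>V) \<le> (\<integral>v. D (S v) * T v \<partial>V)"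
  proof -
    have "(\<Sum>i<n. \<integral>v. D (B (v i)) * P v i \<partial>V) = (\<integral>v. (\<Sum>i<n. D (B (v i)) * P v i) \<partial>V)"
      using ph(1)[OF P] by (simp add: Bochner_Integration.integral_sum)
    also have "\<dots> \<le> (\<integral>v. D (S v) * T v \<partial>V)"
    proof (rule integral_mono)
      show "integrable V (\<lambda>v. \<Sum>i<n. D (B (v i)) * P v i)"
        using ph(1)[OF P] by (intro Bochner_Integration.integrable_sum) auto
      show "integrable V (\<lambda>v. D (S v) * T v)" by (rule int1)
      fix v assume v: "v \<in> space V"
      have "(\<Sum>i<n. D (B (v i)) * P v i) \<le> (\<Sum>i<n. D (S v) * P v i)"
      proof (rule sum_mono)
        fix i assume i: "i \<in> {..<n}"
        have "B (v i) \<le> S v" using S_facts(1)[OF v] i by (simp add: S_def)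
        then have "D (B (v i)) \<le> D (S v)" using monoD[OF Dm] by blast
        moreover have "0 \<le> P v i" using P v i by (simp add: implements_def)
        ultimately show "D (B (v i)) * P v i \<le> D (S v) * P v i" by (rule mult_right_mono)
      qed
      also have "\<dots> = D (S v) * T v" by (simp add: T_def sum_distrib_left)
      finally show "(\<Sum>i<n. D (B (v i)) * P v i) \<le> D (S v) * T v" .
    qed
    finally show ?thesis .
  qed
  have step4: "(\<integral>v. D (S v) * S v \<partial>V) = (\<Sum>i<n. \<integral>v. D (B (v i)) * pay_wpb n M A v i \<partial>V)"
  proof -
    have "(\<integral>v. D (S v) * S v \<partial>V) = (\<integral>v. (\<Sum>i<n. D (B (v i)) * pay_wpb n M A v i) \<partial>V)"
    proof (rule Bochner_Integration.integral_cong)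
      fix v assume v: "v \<in> space V"
      show "D (S v) * S v = (\<Sum>i<n. D (B (v i)) * pay_wpb n M A v i)"
        using S_facts(2)[OF v, of D] by (simp add: S_def wpb_eq)
    qed simp
    also have "\<dots> = (\<Sum>i<n. \<integral>v. D (B (v i)) * pay_wpb n M A v i \<partial>V)"
      using ph(1)[OF wpb_implements] by (simp add: Bochner_Integration.integral_sum)
    finally show ?thesis .
  qed
  have eqs: "(\<Sum>i<n. \<integral>v. D (B (v i)) * P v i \<partial>V) = (\<Sum>i<n. \<integral>v. D (B (v i)) * pay_wpb n M A v i \<partial>V)"
    by (rule sum.cong) (simp_all add: ph(2)[OF P] ph(2)[OF wpb_implements])
  have "(\<integral>v. g (S v) \<partial>V) \<le> (\<integral>v. g (T v) \<partial>V)"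
    using step1 step2 step3 step4 eqs by linarith
  then show ?thesis by (simp add: SW T_def)
qed


end

theorem mainTheorem8:
  fixes n :: nat and f :: "real \<Rightarrow> real" and vbar r :: real
    and A :: "(nat \<Rightarrow> real) \<Rightarrow> nat \<Rightarrow> real"
    and M :: "real measure"
  assumes n: "1 < n"
    and vbar: "0 < vbar"
    and r: "0 \<le> r"
    and f_meas: "f \<in> borel_measurable lborel"
    and f_pos: "\<forall>x\<in>{0..vbar}. 0 < f x"
    and f_zero: "\<forall>x. x \<notin> {0..vbar} \<longrightarrow> f x = 0"
    and M_def: "M = density lborel (\<lambda>x. ennreal (f x))"
    and M_prob: "prob_space M"
    and A_meas: "\<forall>i<n. (\<lambda>v. A v i) \<in> borel_measurable (val_space n M)"
    and A_01: "\<forall>v\<in>space (val_space n M). \<forall>i<n. A v i \<in> {0, 1}"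
    and A_feas: "\<forall>v\<in>space (val_space n M). (\<Sum>i<n. A v i) \<le> 1"
    and A_win: "\<forall>v\<in>space (val_space n M). \<forall>i<n.
                  A v i = 1 \<longrightarrow> r \<le> v i \<and> (\<forall>j<n. v j \<le> v i)"
    and A_alloc: "\<forall>v\<in>space (val_space n M).
                  (\<exists>i<n. r \<le> v i) \<longrightarrow> (\<exists>i<n. A v i = 1)"
  shows "implements n M vbar A (pay_wpb n M A) \<and>
    (\<forall>P g. implements n M vbar A P \<longrightarrow> convex_on UNIV g \<longrightarrow>
       integrable (val_space n M) (\<lambda>v. g (\<Sum>i<n. P v i)) \<longrightarrow>
       integrable (val_space n M) (\<lambda>v. g (\<Sum>i<n. pay_wpb n M A v i)) \<longrightarrow>
       (\<integral>v. g (\<Sum>i<n. pay_wpb n M A v i) \<partial>val_space n M)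
         \<le> (\<integral>v. g (\<Sum>i<n. P v i) \<partial>val_space n M))"
  proof -
  interpret auc n f vbar r A M
    by (rule auc.intro) (rule assms)+
  show ?thesis
    using wpb_implements main_ineq by blast
qed

end
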